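(* Let $0,1,\dots,9$ be ten distinct points of $\mathbb{P}^3(\mathbb{C})$. Then either the ten points lie on a common quadric surface, or the points can be relabeled so that the three lines $01$, $23$, $45$ are mutually skew.
   Context: A quadric surface is the zero locus in $\mathbb{P}^3$ of a nonzero homogeneous polynomial of degree 2 in four variables; $ij$ denotes the line through the points $i$ and $j$; lines are skew if they do not meet. *)

theory Defs
  imports "HOL-Analysis.Analysis"
begin

text \<open>Points of P^3(C) are represented by nonzero vectors in C^4 (homogeneous coordinates).\<close>

definition same_proj_point :: "complex^4 \<Rightarrow> complex^4 \<Rightarrow> bool" where
  "same_proj_point u v \<longleftrightarrow> (\<exists>c::complex. c \<noteq> 0 \<and> u = c *s v)"

definition quad_eval :: "(4 \<Rightarrow> 4 \<Rightarrow> complex) \<Rightarrow> complex^4 \<Rightarrow> complex" where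
  "quad_eval c x = (\<Sum>(i,j)\<in>{(i,j). i \<le> j}. c i j * x$i * x$j)"

definition nonzero_quad :: "(4 \<Rightarrow> 4 \<Rightarrow> complex) \<Rightarrow> bool" where
  "nonzero_quad c \<longleftrightarrow> (\<exists>i j. i \<le> j \<and> c i j \<noteq> 0)"

definition on_quadric :: "(4 \<Rightarrow> 4 \<Rightarrow> complex) \<Rightarrow> complex^4 \<Rightarrow> bool" where
  "on_quadric c x \<longleftrightarrow> quad_eval c x = 0"

definition on_line :: "complex^4 \<Rightarrow> complex^4 \<Rightarrow> complex^4 \<Rightarrow> bool" where
  "on_line a b w \<longleftrightarrow> (\<exists>s t::complex. w = s *s a + t *s b)"

definition lines_meet :: "complex^4 \<Rightarrow> complex^4 \<Rightarrow> complex^4 \<Rightarrow> complex^4 \<Rightarrow> bool" where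
  "lines_meet a b c d \<longleftrightarrow> (\<exists>w. w \<noteq> 0 \<and> on_line a b w \<and> on_line c d w)"

definition skew_lines :: "complex^4 \<Rightarrow> complex^4 \<Rightarrow> complex^4 \<Rightarrow> complex^4 \<Rightarrow> bool" where
  "skew_lines a b c d \<longleftrightarrow> \<not> lines_meet a b c d"

end

theory Submission
  imports Defs
begin



lemma det_4:
  "det (A::'a::comm_ring_1^4^4) =
     A$1$1*A$2$2*A$3$3*A$4$4 - A$1$1*A$2$2*A$3$4*A$4$3 - A$1$1*A$2$3*A$3$2*A$4$4
   + A$1$1*A$2$3*A$3$4*A$4$2 + A$1$1*A$2$4*A$3$2*A$4$3 - A$1$1*A$2$4*A$3$3*A$4$2
   - A$1$2*A$2$1*A$3$3*A$4$4 + A$1$2*A$2$1*A$3$4*A$4$3 + A$1$2*A$2$3*A$3$1*A$4$4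
   - A$1$2*A$2$3*A$3$4*A$4$1 - A$1$2*A$2$4*A$3$1*A$4$3 + A$1$2*A$2$4*A$3$3*A$4$1
   + A$1$3*A$2$1*A$3$2*A$4$4 - A$1$3*A$2$1*A$3$4*A$4$2 - A$1$3*A$2$2*A$3$1*A$4$4
   + A$1$3*A$2$2*A$3$4*A$4$1 + A$1$3*A$2$4*A$3$1*A$4$2 - A$1$3*A$2$4*A$3$2*A$4$1
   - A$1$4*A$2$1*A$3$2*A$4$3 + A$1$4*A$2$1*A$3$3*A$4$2 + A$1$4*A$2$2*A$3$1*A$4$3
   - A$1$4*A$2$2*A$3$3*A$4$1 - A$1$4*A$2$3*A$3$1*A$4$2 + A$1$4*A$2$3*A$3$2*A$4$1"
proof -
  have f1: "finite {2::4, 3, 4}" "1 \<notin> {2::4, 3, 4}" by auto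
  have f2: "finite {3::4, 4}" "2 \<notin> {3::4, 4}" by auto
  have f3: "finite {4::4}" "3 \<notin> {4::4}" by auto
  show ?thesis
    unfolding det_def UNIV_4
    unfolding sum_over_permutations_insert[OF f1]
    unfolding sum_over_permutations_insert[OF f2]
    unfolding sum_over_permutations_insert[OF f3]
    unfolding permutes_sing
    by (simp add: sign_swap_id permutation_swap_id sign_compose permutation_compose swap_id_eq algebra_simps)
qed

definition rows4 :: "'a^4 \<Rightarrow> 'a^4 \<Rightarrow> 'a^4 \<Rightarrow> 'a^4 \<Rightarrow> 'a^4^4" where
  "rows4 a b c d = (\<chi> i. if i = 1 then a else if i = 2 then b else if i = 3 then c else d)"

lemma rows4_nth [simp]: "rows4 a b c d $ 1 = a" "rows4 a b c d $ 2 = b"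
  "rows4 a b c d $ 3 = c" "rows4 a b c d $ 4 = d"
  by (simp_all add: rows4_def)

definition D4 :: "complex^4 \<Rightarrow> complex^4 \<Rightarrow> complex^4 \<Rightarrow> complex^4 \<Rightarrow> complex" where
  "D4 a b c d = det (rows4 a b c d)"

lemma D4_expand: "D4 a b c d =
     a$1*b$2*c$3*d$4 - a$1*b$2*c$4*d$3 - a$1*b$3*c$2*d$4
   + a$1*b$3*c$4*d$2 + a$1*b$4*c$2*d$3 - a$1*b$4*c$3*d$2
   - a$2*b$1*c$3*d$4 + a$2*b$1*c$4*d$3 + a$2*b$3*c$1*d$4
   - a$2*b$3*c$4*d$1 - a$2*b$4*c$1*d$3 + a$2*b$4*c$3*d$1
   + a$3*b$1*c$2*d$4 - a$3*b$1*c$4*d$2 - a$3*b$2*c$1*d$4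
   + a$3*b$2*c$4*d$1 + a$3*b$4*c$1*d$2 - a$3*b$4*c$2*d$1
   - a$4*b$1*c$2*d$3 + a$4*b$1*c$3*d$2 + a$4*b$2*c$1*d$3
   - a$4*b$2*c$3*d$1 - a$4*b$3*c$1*d$2 + a$4*b$3*c$2*d$1"
  unfolding D4_def det_4 by simp

definition pl :: "complex^4 \<Rightarrow> complex^4 \<Rightarrow> 4 \<Rightarrow> 4 \<Rightarrow> complex" where
  "pl u v i j = u$i * v$j - u$j * v$i"

abbreviation e :: "4 \<Rightarrow> complex^4" where "e i \<equiv> axis i 1"

lemma axis_c: "axis i (1::complex) $ j = (if j = i then 1 else 0)"
  by (simp add: axis_def)

lemma D4_swap34: "D4 a b c d = - D4 a b d c"
  by (simp add: D4_expand algebra_simps)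
lemma D4_swap23: "D4 a b c d = - D4 a c b d"
  by (simp add: D4_expand algebra_simps)
lemma D4_swap12: "D4 a b c d = - D4 b a c d"
  by (simp add: D4_expand algebra_simps)
lemma D4_rep: "D4 a b c a = 0" "D4 a b c b = 0" "D4 a b c c = 0"
  by (simp_all add: D4_expand algebra_simps)

lemma D4_lin1: "D4 (s *s a + t *s b) c d f = s * D4 a c d f + t * D4 b c d f"
  unfolding D4_expand by (simp add: field_simps)
lemma D4_lin2: "D4 c (s *s a + t *s b) d f = s * D4 c a d f + t * D4 c b d f"
  unfolding D4_expand by (simp add: field_simps)
lemma D4_eq0: "D4 a a c d = 0" "D4 a b a d = 0" "D4 a b c a = 0" "D4 a b b d = 0" "D4 a b c b = 0" "D4 a b c c = 0"
  unfolding D4_expand by (simp_all add: field_simps)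

lemma skew_of_D4:
  assumes "D4 a b c d \<noteq> 0" shows "skew_lines a b c d"
  unfolding skew_lines_def lines_meet_def on_line_def
proof
  assume "\<exists>w. w \<noteq> 0 \<and> (\<exists>s t. w = s *s a + t *s b) \<and> (\<exists>s t. w = s *s c + t *s d)"
  then obtain w s t u v where w: "w \<noteq> 0" "w = s *s a + t *s b" "w = u *s c + v *s d" by blast
  have "D4 w b c d = s * D4 a b c d" using w(2) by (simp add: D4_lin1 D4_eq0)
  moreover have "D4 w b c d = 0" using w(3) by (simp add: D4_lin1 D4_eq0 D4_swap12[of d b c d])
  ultimately have s0: "s = 0" using assms by simp
  have "D4 a w c d = t * D4 a b c d" using w(2) by (simp add: D4_lin2 D4_eq0)
  moreover have "D4 a w c d = 0" using w(3) by (simp add: D4_lin2 D4_eq0)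
  ultimately have "t = 0" using assms by simp
  with s0 w show False by simp
qed
definition dotc :: "complex^4 \<Rightarrow> complex^4 \<Rightarrow> complex" where
  "dotc l x = l$1*x$1 + l$2*x$2 + l$3*x$3 + l$4*x$4"

definition qprod :: "complex^4 \<Rightarrow> complex^4 \<Rightarrow> 4 \<Rightarrow> 4 \<Rightarrow> complex" where
  "qprod l1 l2 i j = (if i = j then l1$i*l2$i else l1$i*l2$j + l1$j*l2$i)"

lemmas o4 = less_eq_bit0_def less_bit0_def bit0.Rep_numeral bit0.Rep_1 bit0.Rep_0

lemma pairs4: "{(i,j). i \<le> (j::4)} = {(4,4),(4,1),(4,2),(4,3),(1,1),(1,2),(1,3),(2,2),(2,3),(3,3)}"
proof -
  have "\<And>i j::4. i \<le> j \<longleftrightarrow> (i,j) \<in> {(4,4),(4,1),(4,2),(4,3),(1,1),(1,2),(1,3),(2,2),(2,3),(3,3)}"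
    subgoal for i j using exhaust_4[of i] exhaust_4[of j] by (elim disjE; simp add: o4)
    done
  then show ?thesis by auto
qed

lemma quad_eval_qprod: "quad_eval (qprod l1 l2) x = dotc l1 x * dotc l2 x"
  unfolding quad_eval_def pairs4 by (simp add: qprod_def dotc_def algebra_simps)

lemma nonzero_qprod:
  assumes "l1 \<noteq> 0" "l2 \<noteq> 0" shows "nonzero_quad (qprod l1 l2)"
proof -
  obtain i where i: "l1$i \<noteq> 0" using assms(1) by (metis vec_eq_iff zero_index)
  obtain j where j: "l2$j \<noteq> 0" using assms(2) by (metis vec_eq_iff zero_index)
  show ?thesis
  proof (cases "l2$i = 0")
    case False
    then show ?thesis unfolding nonzero_quad_def qprod_def using i by (intro exI[of _ i]) auto
  next
    case True
    then have ij: "i \<noteq> j" using j by auto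
    have "qprod l1 l2 (min i j) (max i j) \<noteq> 0"
      using i j True ij by (cases "i \<le> j") (auto simp: qprod_def min_def max_def)
    moreover have "min i j \<le> max i j" by (metis min.cobounded1 max.cobounded1 order_trans)
    ultimately show ?thesis unfolding nonzero_quad_def by blast
  qed
qed

lemma quadric_of_forms:
  fixes p :: "nat \<Rightarrow> complex^4"
  assumes "l1 \<noteq> 0" "l2 \<noteq> 0" "\<And>i. i < 10 \<Longrightarrow> dotc l1 (p i) = 0 \<or> dotc l2 (p i) = 0"
  shows "\<exists>c. nonzero_quad c \<and> (\<forall>i<10. on_quadric c (p i))"
  using assms nonzero_qprod[OF assms(1,2)]
  by (intro exI[of _ "qprod l1 l2"]) (auto simp: on_quadric_def quad_eval_qprod)

definition cof :: "complex^4 \<Rightarrow> complex^4 \<Rightarrow> complex^4 \<Rightarrow> complex^4" where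
  "cof a b c = (\<chi> k. D4 a b c (e k))"

lemma dotc_cof: "dotc (cof a b c) x = D4 a b c x"
  unfolding dotc_def cof_def D4_expand by (simp add: axis_c algebra_simps)

lemma cof_nz: "D4 a b c x \<noteq> 0 \<Longrightarrow> cof a b c \<noteq> 0"
  using dotc_cof[of a b c x] by (auto simp: dotc_def)



definition "P24 = {(1,2,3,4),(1,2,4,3),(1,3,2,4),(1,3,4,2),(1,4,2,3),(1,4,3,2),
 (2,1,3,4),(2,1,4,3),(2,3,1,4),(2,3,4,1),(2,4,1,3),(2,4,3,1),
 (3,1,2,4),(3,1,4,2),(3,2,1,4),(3,2,4,1),(3,4,1,2),(3,4,2,1),
 (4,1,2,3),(4,1,3,2),(4,2,1,3),(4,2,3,1),(4,3,1,2),(4,3,2,1::4)}"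

lemma perm24: "distinct [i,j,k,m::4] \<Longrightarrow> (i,j,k,m) \<in> P24"
  unfolding P24_def
  using exhaust_4[of i] exhaust_4[of j] exhaust_4[of k] exhaust_4[of m]
  by (elim disjE; simp)

lemma D4_eeA: assumes "distinct [i,j,k,m]" shows "D4 (e i) (e j) u v = 0 \<longleftrightarrow> pl u v k m = 0"
proof -
  have "(i,j,k,m) \<in> P24" using perm24[OF assms] .
  then show ?thesis unfolding P24_def
    by (elim insertE emptyE; simp add: D4_expand axis_c pl_def; metis)
qed

lemma D4_e4: assumes "distinct [i,j,k,m]" shows "D4 (e i) (e j) (e k) (e m) \<noteq> 0"
proof -
  have "(i,j,k,m) \<in> P24" using perm24[OF assms] .
  then show ?thesis unfolding P24_def
    by (elim insertE emptyE; simp add: D4_expand axis_c)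
qed

lemma ex_notin: assumes "card (A::4 set) < 4" shows "\<exists>x. x \<notin> A"
proof (rule ccontr)
  assume "\<not> ?thesis" then have "A = UNIV" by auto
  then show False using assms by simp
qed

lemma ex_compl: assumes "i \<noteq> (j::4)" shows "\<exists>k m. distinct [i,j,k,m]"
proof -
  have "card {i,j} < 4" using card_length[of "[i,j]"] by simp
  then obtain k where k: "k \<notin> {i,j}" using ex_notin by blast
  have "card {i,j,k} < 4" using card_length[of "[i,j,k]"] by simp
  then obtain m where m: "m \<notin> {i,j,k}" using ex_notin by blast
  show ?thesis using assms k m by (intro exI[of _ k] exI[of _ m]) auto
qed



lemma D4_pairswap: "D4 a b c d = D4 c d a b"
  unfolding D4_expand by (simp add: algebra_simps)

lemma plucker_nz:
  assumes "a \<noteq> 0" "b \<noteq> 0" "\<not> same_proj_point b a"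
  shows "\<exists>k m. D4 a b (e k) (e m) \<noteq> 0"
proof (rule ccontr)
  assume H: "\<not> ?thesis"
  obtain i where i: "a$i \<noteq> 0" using assms(1) by (metis vec_eq_iff zero_index)
  have pz: "pl a b i j = 0" for j
  proof (cases "j = i")
    case True then show ?thesis by (simp add: pl_def)
  next
    case False
    then obtain k m where d: "distinct [i,j,k,m]" using ex_compl by metis
    then have "distinct [k,m,i,j]" by auto
    from D4_eeA[OF this, of a b] H show ?thesis by (simp add: D4_pairswap[of "e k"])
  qed
  define c where "c = b$i / a$i"
  have bc: "b = c *s a"
    unfolding vec_eq_iff c_def
  proof
    fix j show "b $ j = (b $ i / a $ i *s a) $ j"
      using pz[of j] i by (simp add: pl_def field_simps)
  qed
  have "c \<noteq> 0" using bc assms(2) by auto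
  then show False using assms(3) bc unfolding same_proj_point_def by blast
qed

lemma sum4: assumes "distinct [a,b,c,d::4]" shows "(\<Sum>x\<in>UNIV. f x) = f a + f b + f c + f d"
proof -
  have "card {a,b,c,d} = 4" using assms distinct_card[of "[a,b,c,d]"] by simp
  then have "{a,b,c,d} = UNIV" by (intro card_subset_eq) auto
  then have "(\<Sum>x\<in>UNIV. f x) = (\<Sum>x\<in>{a,b,c,d}. f x)" by simp
  also have "\<dots> = f a + f b + f c + f d" using assms by (simp add: add.assoc)
  finally show ?thesis .
qed

lemma cover4: assumes "distinct [a,b,c,d::4]" shows "x = a \<or> x = b \<or> x = c \<or> x = d"
proof -
  have "card {a,b,c,d} = 4" using assms distinct_card[of "[a,b,c,d]"] by simp
  then have "{a,b,c,d} = UNIV" by (intro card_subset_eq) auto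
  then show ?thesis by auto
qed

lemma pair_miss:
  fixes P :: "4 \<Rightarrow> 4 \<Rightarrow> complex" and L :: "4 \<Rightarrow> complex"
  assumes anti: "\<And>a b. P a b = - P b a"
    and Lnz: "\<And>a. L a \<noteq> 0"
    and star: "\<And>b. (\<Sum>a\<in>UNIV. L a * P a b) = 0"
    and prodA: "\<And>a b c d. distinct [a,b,c,d] \<Longrightarrow> P a b = 0 \<or> P c d = 0"
    and nz: "P a0 b0 \<noteq> 0"
  shows "\<exists>d. (\<forall>x. P x d = 0) \<and> (\<forall>x y. x \<noteq> d \<longrightarrow> y \<noteq> d \<longrightarrow> x \<noteq> y \<longrightarrow> P x y \<noteq> 0)"
proof -
  have diag: "P x x = 0" for x using anti[of x x] by simp
  have sub: "\<exists>d. (\<forall>x. P x d = 0) \<and> (\<forall>x y. x \<noteq> d \<longrightarrow> y \<noteq> d \<longrightarrow> x \<noteq> y \<longrightarrow> P x y \<noteq> 0)"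
    if ds: "distinct [a,b,c,d]" and ab: "P a b \<noteq> 0" and ac: "P a c \<noteq> 0" for a b c d
  proof -
    have cd: "P c d = 0" using prodA[OF ds] ab by auto
    have "distinct [a,c,b,d]" using ds by auto
    from prodA[OF this] ac have bd: "P b d = 0" by auto
    have "L a * P a b + L b * P b b + L c * P c b + L d * P d b = 0"
      using star[of b] sum4[OF ds, of "\<lambda>x. L x * P x b"] by simp
    then have "L a * P a b + L c * P c b = 0" using diag anti[of d b] bd by simp
    then have cb: "P c b \<noteq> 0" using ab Lnz[of a] by auto
    have "distinct [b,c,a,d]" using ds by auto
    from prodA[OF this] cb anti[of b c] have ad: "P a d = 0" by auto
    show ?thesis
    proof (intro exI[of _ d] conjI allI impI)
      fix x show "P x d = 0" using cover4[OF ds, of x] ad bd cd diag by auto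
    next
      fix x y assume "x \<noteq> d" "y \<noteq> d" "x \<noteq> y"
      then show "P x y \<noteq> 0"
        using cover4[OF ds, of x] cover4[OF ds, of y] ab ac cb anti[of a b] anti[of a c] anti[of c b]
        by auto
    qed
  qed
  have "a0 \<noteq> b0" using nz diag by auto
  then obtain c d where ds: "distinct [a0,b0,c,d]" using ex_compl by metis
  have "L a0 * P a0 a0 + L b0 * P b0 a0 + L c * P c a0 + L d * P d a0 = 0"
    using star[of a0] sum4[OF ds, of "\<lambda>x. L x * P x a0"] by simp
  then have "L b0 * P b0 a0 + L c * P c a0 + L d * P d a0 = 0" using diag by simp
  moreover have "P b0 a0 \<noteq> 0" using nz anti[of a0 b0] by auto
  ultimately have "P c a0 \<noteq> 0 \<or> P d a0 \<noteq> 0" using Lnz[of b0] by auto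
  then have "P a0 c \<noteq> 0 \<or> P a0 d \<noteq> 0" using anti[of c a0] anti[of d a0] by auto
  moreover have "distinct [a0,b0,d,c]" using ds by auto
  ultimately show ?thesis using sub[OF ds nz] sub[of a0 b0 d c] nz by blast
qed



lemma star_id: "(\<Sum>a\<in>UNIV. D4 p q r (e a) * pl u v a b) = D4 p q r u * v$b - D4 p q r v * u$b"
  unfolding UNIV_4 by (simp add: D4_expand axis_c pl_def) algebra

lemma laplace: "D4 u v w x = pl u v 1 2 * pl w x 3 4 - pl u v 1 3 * pl w x 2 4 + pl u v 1 4 * pl w x 2 3
   + pl u v 2 3 * pl w x 1 4 - pl u v 2 4 * pl w x 1 3 + pl u v 3 4 * pl w x 1 2"
  unfolding D4_expand pl_def by algebra

lemma samemiss: assumes "\<forall>x. pl u v x d = 0" "pl u v a b \<noteq> 0" shows "u$d = 0 \<and> v$d = 0"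
proof -
  have ud: "u$d = 0"
  proof (rule ccontr)
    assume h: "u$d \<noteq> 0"
    have va: "v$a = v$d / u$d * u$a" using assms(1)[rule_format, of a] h
      by (simp add: pl_def field_simps)
    have vb: "v$b = v$d / u$d * u$b" using assms(1)[rule_format, of b] h
      by (simp add: pl_def field_simps)
    have "pl u v a b = 0" unfolding pl_def va vb by simp
    then show False using assms(2) by simp
  qed
  moreover have "v$d = 0"
  proof (rule ccontr)
    assume h: "v$d \<noteq> 0"
    have "u$x = 0" for x using assms(1)[rule_format, of x] h ud by (simp add: pl_def)
    then have "pl u v a b = 0" unfolding pl_def by simp
    then show False using assms(2) by simp
  qed
  ultimately show ?thesis by simp
qed

lemma zero_col: assumes "p$d = 0" "q$d = 0" "r$d = 0" "a \<noteq> d" shows "D4 p q r (e a) = 0"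
  using assms exhaust_4[of a] exhaust_4[of d]
  by (elim disjE; simp add: D4_expand axis_c)



lemma pair_missing:
  assumes Lnz: "\<And>t. D4 p q r (e t) \<noteq> 0"
    and uv: "D4 p q r u = 0" "D4 p q r v = 0"
    and H: "\<And>a b c d. distinct [a,b,c,d] \<Longrightarrow> D4 (e a) (e b) u v = 0 \<or> D4 (e c) (e d) u v = 0"
    and nz: "pl u v a0 b0 \<noteq> 0"
  shows "\<exists>d. (\<forall>x. pl u v x d = 0) \<and> (\<forall>x y. x \<noteq> d \<longrightarrow> y \<noteq> d \<longrightarrow> x \<noteq> y \<longrightarrow> pl u v x y \<noteq> 0)"
proof (rule pair_miss[of "pl u v" "\<lambda>t. D4 p q r (e t)" a0 b0])
  show "pl u v a0 b0 \<noteq> 0" by (rule nz)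
  show "D4 p q r (e a) \<noteq> 0" for a by (rule Lnz)
  show "pl u v a b = - pl u v b a" for a b by (simp add: pl_def)
  show "(\<Sum>a\<in>UNIV. D4 p q r (e a) * pl u v a b) = 0" for b
    unfolding star_id uv by simp
  show "pl u v a b = 0 \<or> pl u v c d = 0" if "distinct [a,b,c,d]" for a b c d
  proof -
    have d2: "distinct [c,d,a,b]" using that by auto
    show ?thesis using H[OF that] D4_eeA[OF that, of u v] D4_eeA[OF d2, of u v] by auto
  qed
qed

lemma pl_nz_of:
  assumes "D4 u v w x \<noteq> 0" shows "\<exists>a b. pl u v a b \<noteq> 0"
proof (rule ccontr)
  assume "\<not> ?thesis"
  then have "pl u v a b = 0" for a b by auto
  then have "D4 u v w x = 0" unfolding laplace by simp
  with assms show False by simp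
qed

lemma std_lemma:
  assumes Lnz: "\<And>t. D4 p q r (e t) \<noteq> 0"
  shows "\<exists>y0 y1 y2 y3 y4 y5. {y0,y1,y2,y3,y4,y5} \<subseteq> {p,q,r} \<union> range e \<and>
     D4 y0 y1 y2 y3 \<noteq> 0 \<and> D4 y0 y1 y4 y5 \<noteq> 0 \<and> D4 y2 y3 y4 y5 \<noteq> 0"
proof (rule ccontr)
  assume "\<not> ?thesis"
  then have H: "\<And>y0 y1 y2 y3 y4 y5. {y0,y1,y2,y3,y4,y5} \<subseteq> {p,q,r} \<union> range e \<Longrightarrow>
     D4 y0 y1 y2 y3 = 0 \<or> D4 y0 y1 y4 y5 = 0 \<or> D4 y2 y3 y4 y5 = 0"
    by (simp only: not_ex de_Morgan_conj not_not disj_imp[symmetric]) (meson)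
  have HA: "D4 (e a) (e b) u v = 0 \<or> D4 (e c) (e d) u v = 0"
    if "distinct [a,b,c,d]" "u \<in> {p,q,r}" "v \<in> {p,q,r}" for a b c d u v
  proof -
    have "{e a, e b, e c, e d, u, v} \<subseteq> {p,q,r} \<union> range e" using that(2,3) by blast
    from H[OF this] D4_e4[OF that(1)] show ?thesis by simp
  qed
  have z: "D4 p q r p = 0" "D4 p q r q = 0" "D4 p q r r = 0" by (simp_all add: D4_eq0)
  obtain a1 b1 where n1: "pl p q a1 b1 \<noteq> 0" using pl_nz_of[OF Lnz[of 1]] by blast
  obtain a2 b2 where n2: "pl p r a2 b2 \<noteq> 0"
    using pl_nz_of[of p r q "e 1"] Lnz[of 1] D4_swap23[of p q r "e 1"] by auto
  obtain a3 b3 where n3: "pl q r a3 b3 \<noteq> 0"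
  proof -
    have "D4 q r p (e 1) \<noteq> 0" using Lnz[of 1] D4_swap23[of q r p "e 1"] D4_swap12[of q p r "e 1"] by simp
    then show ?thesis using pl_nz_of that by blast
  qed
  obtain d1 where m1: "\<forall>x. pl p q x d1 = 0" "\<forall>x y. x \<noteq> d1 \<longrightarrow> y \<noteq> d1 \<longrightarrow> x \<noteq> y \<longrightarrow> pl p q x y \<noteq> 0"
    using pair_missing[OF Lnz z(1) z(2) HA n1] by auto
  obtain d2 where m2: "\<forall>x. pl p r x d2 = 0" "\<forall>x y. x \<noteq> d2 \<longrightarrow> y \<noteq> d2 \<longrightarrow> x \<noteq> y \<longrightarrow> pl p r x y \<noteq> 0"
    using pair_missing[OF Lnz z(1) z(3) HA n2] by auto
  obtain d3 where m3: "\<forall>x. pl q r x d3 = 0" "\<forall>x y. x \<noteq> d3 \<longrightarrow> y \<noteq> d3 \<longrightarrow> x \<noteq> y \<longrightarrow> pl q r x y \<noteq> 0"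
    using pair_missing[OF Lnz z(2) z(3) HA n3] by auto
  have s1: "p$d1 = 0 \<and> q$d1 = 0" using samemiss[OF m1(1) n1] .
  have s2: "p$d2 = 0 \<and> r$d2 = 0" using samemiss[OF m2(1) n2] .
  have s3: "q$d3 = 0 \<and> r$d3 = 0" using samemiss[OF m3(1) n3] .
  have contra: False if "p$d = 0" "q$d = 0" "r$d = 0" for d
  proof -
    obtain a :: 4 where "a \<noteq> d" using zero_neq_one by metis
    then show False using zero_col[OF that] Lnz by blast
  qed
  have "d1 \<noteq> d2" using s1 s2 contra by metis
  moreover have "d1 \<noteq> d3" using s1 s3 contra by metis
  moreover have "d2 \<noteq> d3" using s2 s3 contra by metis
  ultimately obtain d0 where ds: "distinct [d1,d2,d3,d0]"
    using ex_notin[of "{d1,d2,d3}"] card_length[of "[d1,d2,d3]"] by fastforce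
  have pls: "pl u v x y = - pl v u x y" for u v x y by (simp add: pl_def)
  have w1: "D4 (e d3) q (e d2) r \<noteq> 0"
  proof -
    have dd: "distinct [d3,d2,d1,d0]" using ds by auto
    have "pl q r d1 d0 \<noteq> 0" using m3(2) ds by auto
    then have "D4 (e d3) (e d2) q r \<noteq> 0" using D4_eeA[OF dd, of q r] by simp
    then show ?thesis using D4_swap23[of "e d3" q "e d2" r] by simp
  qed
  have w2: "D4 (e d3) q (e d1) p \<noteq> 0"
  proof -
    have dd: "distinct [d3,d1,d2,d0]" using ds by auto
    have "pl p q d2 d0 \<noteq> 0" using m1(2) ds by auto
    then have "pl q p d2 d0 \<noteq> 0" using pls[of q p] by simp
    then have "D4 (e d3) (e d1) q p \<noteq> 0" using D4_eeA[OF dd, of q p] by simp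
    then show ?thesis using D4_swap23[of "e d3" q "e d1" p] by simp
  qed
  have w3: "D4 (e d2) r (e d1) p \<noteq> 0"
  proof -
    have dd: "distinct [d2,d1,d3,d0]" using ds by auto
    have "pl p r d3 d0 \<noteq> 0" using m2(2) ds by auto
    then have "pl r p d3 d0 \<noteq> 0" using pls[of r p] by simp
    then have "D4 (e d2) (e d1) r p \<noteq> 0" using D4_eeA[OF dd, of r p] by simp
    then show ?thesis using D4_swap23[of "e d2" r "e d1" p] by simp
  qed
  show False using H[of "e d3" q "e d2" r "e d1" p] w1 w2 w3 by auto
qed


lemma rows4_mult: "rows4 ((M::complex^4^4) *v a) (M *v b) (M *v c) (M *v d) = rows4 a b c d ** transpose M"
  unfolding vec_eq_iff
  by (auto simp: matrix_matrix_mult_def matrix_vector_mult_def transpose_def rows4_def mult.commute intro!: sum.cong)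

lemma D4_mult: "D4 (M *v a) (M *v b) (M *v c) (M *v d) = det M * D4 a b c d"
  unfolding D4_def rows4_mult det_mul det_transpose by simp

lemma mv_axis: "(A::complex^4^4) *v axis k 1 = (\<chi> i. A$i$k)"
  by (simp add: vec_eq_iff matrix_vector_mult_def axis_def mult_if_delta sum.delta' if_distrib cong: if_cong)

lemma rows4_e: "transpose (rows4 x1 x2 x3 x4) *v e 1 = x1" "transpose (rows4 x1 x2 x3 x4) *v e 2 = x2"
   "transpose (rows4 x1 x2 x3 x4) *v e 3 = x3" "transpose (rows4 x1 x2 x3 x4) *v e 4 = x4"
  by (simp_all add: mv_axis transpose_def vec_eq_iff)
lemma lemmaII:
  assumes X: "D4 x1 x2 x3 x4 \<noteq> 0"
    and L: "D4 p q r x1 \<noteq> 0" "D4 p q r x2 \<noteq> 0" "D4 p q r x3 \<noteq> 0" "D4 p q r x4 \<noteq> 0"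
  shows "\<exists>y0 y1 y2 y3 y4 y5. {y0,y1,y2,y3,y4,y5} \<subseteq> {p,q,r,x1,x2,x3,x4} \<and>
     D4 y0 y1 y2 y3 \<noteq> 0 \<and> D4 y0 y1 y4 y5 \<noteq> 0 \<and> D4 y2 y3 y4 y5 \<noteq> 0"
proof -
  define B where "B = transpose (rows4 x1 x2 x3 x4)"
  have "det B \<noteq> 0" using X by (simp add: B_def D4_def)
  then have "invertible B" by (simp add: invertible_det_nz)
  then obtain B' where BB: "B ** B' = mat 1" "B' ** B = mat 1" unfolding invertible_def by blast
  have "det B' * det B = 1" using det_mul[of B' B] BB(2) by simp
  then have dB: "det B' \<noteq> 0" by auto
  define g where "g y = B' *v y" for y
  have gx: "g x1 = e 1" "g x2 = e 2" "g x3 = e 3" "g x4 = e 4"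
  proof -
    have "g (B *v y) = y" for y unfolding g_def by (simp add: matrix_vector_mul_assoc BB(2))
    then show "g x1 = e 1" "g x2 = e 2" "g x3 = e 3" "g x4 = e 4"
      using rows4_e[of x1 x2 x3 x4] unfolding B_def by metis+
  qed
  have gD: "D4 (g a) (g b) (g c) (g d) = det B' * D4 a b c d" for a b c d
    unfolding g_def by (rule D4_mult)
  have Lnz: "D4 (g p) (g q) (g r) (e t) \<noteq> 0" for t
  proof -
    have "e t \<in> {g x1, g x2, g x3, g x4}" using exhaust_4[of t] gx by auto
    then obtain x where x: "x \<in> {x1,x2,x3,x4}" "e t = g x" by auto
    have "D4 p q r x \<noteq> 0" using x(1) L by auto
    then show ?thesis unfolding x(2) gD using dB by simp
  qed
  obtain y0 y1 y2 y3 y4 y5 where Y: "{y0,y1,y2,y3,y4,y5} \<subseteq> {g p, g q, g r} \<union> range e"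
    and n: "D4 y0 y1 y2 y3 \<noteq> 0" "D4 y0 y1 y4 y5 \<noteq> 0" "D4 y2 y3 y4 y5 \<noteq> 0"
    using std_lemma[OF Lnz] by metis
  have pre: "\<exists>z \<in> {p,q,r,x1,x2,x3,x4}. y = g z" if "y \<in> {g p, g q, g r} \<union> range e" for y
  proof -
    have "range e = {g x1, g x2, g x3, g x4}" unfolding UNIV_4 using gx by simp
    then have "y \<in> {g p, g q, g r, g x1, g x2, g x3, g x4}" using that by blast
    then show ?thesis by blast
  qed
  have Y': "y0 \<in> {g p, g q, g r} \<union> range e" "y1 \<in> {g p, g q, g r} \<union> range e"
    "y2 \<in> {g p, g q, g r} \<union> range e" "y3 \<in> {g p, g q, g r} \<union> range e"
    "y4 \<in> {g p, g q, g r} \<union> range e" "y5 \<in> {g p, g q, g r} \<union> range e"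
    using Y by (simp_all only: insert_subset)
  obtain z0 where z0: "z0 \<in> {p,q,r,x1,x2,x3,x4}" "y0 = g z0" using pre[OF Y'(1)] by blast
  obtain z1 where z1: "z1 \<in> {p,q,r,x1,x2,x3,x4}" "y1 = g z1" using pre[OF Y'(2)] by blast
  obtain z2 where z2: "z2 \<in> {p,q,r,x1,x2,x3,x4}" "y2 = g z2" using pre[OF Y'(3)] by blast
  obtain z3 where z3: "z3 \<in> {p,q,r,x1,x2,x3,x4}" "y3 = g z3" using pre[OF Y'(4)] by blast
  obtain z4 where z4: "z4 \<in> {p,q,r,x1,x2,x3,x4}" "y4 = g z4" using pre[OF Y'(5)] by blast
  obtain z5 where z5: "z5 \<in> {p,q,r,x1,x2,x3,x4}" "y5 = g z5" using pre[OF Y'(6)] by blast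
  have Z: "{z0,z1,z2,z3,z4,z5} \<subseteq> {p,q,r,x1,x2,x3,x4}" using z0 z1 z2 z3 z4 z5 by (simp only: insert_subset empty_subsetI simp_thms)
  note yz = z0(2) z1(2) z2(2) z3(2) z4(2) z5(2)
  have "D4 z0 z1 z2 z3 \<noteq> 0" "D4 z0 z1 z4 z5 \<noteq> 0" "D4 z2 z3 z4 z5 \<noteq> 0" using n unfolding yz gD by auto
  then show ?thesis using Z by blast
qed



lemma extend_perm:
  assumes d: "distinct [i0,i1,i2,i3,i4,i5]" and s: "set [i0,i1,i2,i3,i4,i5] \<subseteq> {..<10::nat}"
  shows "\<exists>\<sigma>. bij_betw \<sigma> {..<10::nat} {..<10} \<and> \<sigma> 0 = i0 \<and> \<sigma> 1 = i1 \<and> \<sigma> 2 = i2 \<and> \<sigma> 3 = i3 \<and> \<sigma> 4 = i4 \<and> \<sigma> 5 = i5"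
proof -
  define xs where "xs = [i0,i1,i2,i3,i4,i5]"
  have dx: "distinct xs" and sx: "set xs \<subseteq> {..<10}" using d s by (simp_all add: xs_def)
  have cx: "card (set xs) = 6" using distinct_card[OF dx] by (simp add: xs_def)
  have "card ({..<10::nat} - set xs) = 4" using card_Diff_subset[OF _ sx] cx by simp
  then have "card {6..<10::nat} = card ({..<10::nat} - set xs)" by simp
  then obtain h where h: "bij_betw h {6..<10::nat} ({..<10} - set xs)"
    using bij_betw_iff_card[of "{6..<10::nat}" "{..<10} - set xs"] by auto
  define \<sigma> where "\<sigma> n = (if n < 6 then xs ! n else h n)" for n
  have b1: "bij_betw \<sigma> {..<6} (set xs)"
  proof -
    have "bij_betw ((!) xs) {..<6} (set xs)" using bij_betw_nth[OF dx, of "{..<6}" "set xs"] by (simp add: xs_def)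
    moreover have "bij_betw \<sigma> {..<6} (set xs) = bij_betw ((!) xs) {..<6} (set xs)"
      by (rule bij_betw_cong) (simp add: \<sigma>_def)
    ultimately show ?thesis by simp
  qed
  have b2: "bij_betw \<sigma> {6..<10} ({..<10} - set xs)"
  proof -
    have "bij_betw \<sigma> {6..<10} ({..<10} - set xs) = bij_betw h {6..<10} ({..<10} - set xs)"
      by (rule bij_betw_cong) (simp add: \<sigma>_def)
    then show ?thesis using h by simp
  qed
  have "bij_betw \<sigma> ({..<6} \<union> {6..<10}) (set xs \<union> ({..<10} - set xs))"
    by (rule bij_betw_combine[OF b1 b2]) auto
  moreover have "{..<6} \<union> {6..<10::nat} = {..<10}" by auto
  moreover have "set xs \<union> ({..<10} - set xs) = {..<10}" using sx by auto
  ultimately have "bij_betw \<sigma> {..<10} {..<10}" by simp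
  then show ?thesis by (intro exI[of _ \<sigma>]) (simp add: \<sigma>_def xs_def)
qed

theorem mainTheorem12:
  fixes p :: "nat \<Rightarrow> complex^4"
  assumes nz: "\<And>i. i < 10 \<Longrightarrow> p i \<noteq> 0"
    and dist: "\<And>i j. i < 10 \<Longrightarrow> j < 10 \<Longrightarrow> i \<noteq> j \<Longrightarrow> \<not> same_proj_point (p i) (p j)"
  shows "(\<exists>c. nonzero_quad c \<and> (\<forall>i<10. on_quadric c (p i)))
       \<or> (\<exists>\<sigma>. bij_betw \<sigma> {..<10::nat} {..<10} \<and>
            skew_lines (p (\<sigma> 0)) (p (\<sigma> 1)) (p (\<sigma> 2)) (p (\<sigma> 3)) \<and>
            skew_lines (p (\<sigma> 0)) (p (\<sigma> 1)) (p (\<sigma> 4)) (p (\<sigma> 5)) \<and>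
            skew_lines (p (\<sigma> 2)) (p (\<sigma> 3)) (p (\<sigma> 4)) (p (\<sigma> 5)))"
proof (rule ccontr)
  assume neg: "\<not> ?thesis"
  then have nQ: "\<not> (\<exists>c. nonzero_quad c \<and> (\<forall>i<10. on_quadric c (p i)))" by blast
  have nK: False if "bij_betw \<sigma> {..<10::nat} {..<10}"
      "skew_lines (p (\<sigma> 0)) (p (\<sigma> 1)) (p (\<sigma> 2)) (p (\<sigma> 3))"
      "skew_lines (p (\<sigma> 0)) (p (\<sigma> 1)) (p (\<sigma> 4)) (p (\<sigma> 5))"
      "skew_lines (p (\<sigma> 2)) (p (\<sigma> 3)) (p (\<sigma> 4)) (p (\<sigma> 5))" for \<sigma>
    using neg that by blast
  have H: "D4 (p i0) (p i1) (p i2) (p i3) = 0 \<or> D4 (p i0) (p i1) (p i4) (p i5) = 0 \<or> D4 (p i2) (p i3) (p i4) (p i5) = 0"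
    if idx: "set [i0,i1,i2,i3,i4,i5] \<subseteq> {..<10}" for i0 i1 i2 i3 i4 i5
  proof (rule ccontr)
    assume "\<not> ?thesis"
    then have n: "D4 (p i0) (p i1) (p i2) (p i3) \<noteq> 0" "D4 (p i0) (p i1) (p i4) (p i5) \<noteq> 0" "D4 (p i2) (p i3) (p i4) (p i5) \<noteq> 0"
      by auto
    have "distinct [i0,i1,i2,i3,i4,i5]"
      using n by (auto simp: D4_eq0)
    then obtain \<sigma> where s: "bij_betw \<sigma> {..<10::nat} {..<10}" "\<sigma> 0 = i0" "\<sigma> 1 = i1" "\<sigma> 2 = i2" "\<sigma> 3 = i3" "\<sigma> 4 = i4" "\<sigma> 5 = i5"
      using extend_perm[OF _ idx] by blast
    show False using nK[OF s(1)] skew_of_D4[OF n(1)] skew_of_D4[OF n(2)] skew_of_D4[OF n(3)] unfolding s(2-7) by blast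
  qed
  have H2: "D4 y0 y1 y2 y3 = 0 \<or> D4 y0 y1 y4 y5 = 0 \<or> D4 y2 y3 y4 y5 = 0"
    if "{y0,y1,y2,y3,y4,y5} \<subseteq> p ` {..<10}" for y0 y1 y2 y3 y4 y5
  proof -
    from that obtain i0 i1 i2 i3 i4 i5 where "i0 < 10" "i1 < 10" "i2 < 10" "i3 < 10" "i4 < 10" "i5 < 10"
      "y0 = p i0" "y1 = p i1" "y2 = p i2" "y3 = p i3" "y4 = p i4" "y5 = p i5"
      unfolding insert_subset image_iff lessThan_iff Bex_def by (elim conjE exE) (rule that; assumption)
    then show ?thesis using H[of i0 i1 i2 i3 i4 i5] by simp
  qed
  have forms: False if "l1 \<noteq> 0" "l2 \<noteq> 0" "\<And>m. m < 10 \<Longrightarrow> dotc l1 (p m) = 0 \<or> dotc l2 (p m) = 0" for l1 l2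
    using quadric_of_forms[of l1 l2 p, OF that(1) that(2) that(3)] nQ by blast
  have line: "\<exists>l. l \<noteq> 0 \<and> (\<forall>m<10. (\<forall>y. D4 (p a) (p b) (p m) y = 0) \<longrightarrow> dotc l (p m) = 0)"
    if ab: "a < 10" "b < 10" "a \<noteq> b" for a b
  proof -
    obtain k m0 where km: "D4 (p a) (p b) (e k) (e m0) \<noteq> 0"
      using plucker_nz[OF nz[OF ab(1)] nz[OF ab(2)] dist[OF ab(2,1) ab(3)[symmetric]]] by blast
    show ?thesis
    proof (intro exI[of _ "cof (p a) (p b) (e k)"] conjI allI impI)
      show "cof (p a) (p b) (e k) \<noteq> 0" using cof_nz[OF km] .
    next
      fix m assume "m < 10" "\<forall>y. D4 (p a) (p b) (p m) y = 0"
      then show "dotc (cof (p a) (p b) (e k)) (p m) = 0"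
        unfolding dotc_cof using D4_swap34[of "p a" "p b" "e k" "p m"] by simp
    qed
  qed
  show False
  proof (cases "\<exists>i j k y. i < 10 \<and> j < 10 \<and> k < 10 \<and> D4 (p i) (p j) (p k) y \<noteq> 0")
    case False
    obtain l where l: "l \<noteq> 0" "\<forall>m<10. (\<forall>y. D4 (p 0) (p 1) (p m) y = 0) \<longrightarrow> dotc l (p m) = 0"
      using line[of 0 1] by auto
    show False using forms[of l l] l False by auto
  next
    case True
    then obtain i j k y0 where ijk: "i < 10" "j < 10" "k < 10" "D4 (p i) (p j) (p k) y0 \<noteq> 0" by blast
    define L where "L = cof (p i) (p j) (p k)"
    have Lnz: "L \<noteq> 0" unfolding L_def using cof_nz[OF ijk(4)] .
    have dL: "dotc L x = D4 (p i) (p j) (p k) x" for x unfolding L_def dotc_cof ..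
    define T where "T = {m. m < 10 \<and> D4 (p i) (p j) (p k) (p m) \<noteq> 0}"
    have offT: "dotc L (p m) = 0" if "m \<notin> T" "m < 10" for m using that dL by (auto simp: T_def)
    have iT: "i \<notin> T" by (simp add: T_def D4_eq0)
    show False
    proof (cases "\<exists>a b c y. a \<in> T \<and> b \<in> T \<and> c \<in> T \<and> D4 (p a) (p b) (p c) y \<noteq> 0")
      case True
      then obtain a b c y where abc: "a \<in> T" "b \<in> T" "c \<in> T" "D4 (p a) (p b) (p c) y \<noteq> 0" by blast
      show False
      proof (cases "\<exists>d \<in> T. D4 (p a) (p b) (p c) (p d) \<noteq> 0")
        case True
        then obtain d where d: "d \<in> T" "D4 (p a) (p b) (p c) (p d) \<noteq> 0" by blast
        have Ls: "D4 (p i) (p j) (p k) (p a) \<noteq> 0" "D4 (p i) (p j) (p k) (p b) \<noteq> 0"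
          "D4 (p i) (p j) (p k) (p c) \<noteq> 0" "D4 (p i) (p j) (p k) (p d) \<noteq> 0"
          using abc d by (auto simp: T_def)
        obtain y0 y1 y2 y3 y4 y5 where Y: "{y0,y1,y2,y3,y4,y5} \<subseteq> {p i, p j, p k, p a, p b, p c, p d}"
          and n: "D4 y0 y1 y2 y3 \<noteq> 0" "D4 y0 y1 y4 y5 \<noteq> 0" "D4 y2 y3 y4 y5 \<noteq> 0"
          using lemmaII[OF d(2) Ls] by metis
        have "{p i, p j, p k, p a, p b, p c, p d} \<subseteq> p ` {..<10}"
          using ijk abc d by (auto simp: T_def)
        with Y have "{y0,y1,y2,y3,y4,y5} \<subseteq> p ` {..<10}" by (rule subset_trans)
        from H2[OF this] n show False by simp
      next
        case False
        show False
        proof (rule forms[OF Lnz cof_nz[OF abc(4)]])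
          fix m :: nat assume "m < 10"
          then show "dotc L (p m) = 0 \<or> dotc (cof (p a) (p b) (p c)) (p m) = 0"
            using False offT[of m] unfolding dotc_cof by auto
        qed
      qed
    next
      case False
      then have B: "\<And>a b c y. a \<in> T \<Longrightarrow> b \<in> T \<Longrightarrow> c \<in> T \<Longrightarrow> D4 (p a) (p b) (p c) y = 0" by blast
      show False
      proof (cases "T = {}")
        case True
        show False by (rule forms[OF Lnz Lnz]) (simp add: offT True)
      next
        case False
        then obtain a where a: "a \<in> T" by blast
        have aT: "a < 10" using a by (simp add: T_def)
        obtain b where b: "b < 10" "b \<noteq> a" "\<forall>m\<in>T. \<forall>y. D4 (p a) (p b) (p m) y = 0"
        proof (cases "\<exists>b\<in>T. b \<noteq> a")
          case True
          then obtain b where "b \<in> T" "b \<noteq> a" by blast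
          then have bb: "b \<in> T" "b \<noteq> a" by blast+
          show ?thesis
          proof (rule that[of b])
            show "b < 10" using bb(1) by (simp add: T_def)
            show "b \<noteq> a" by (rule bb(2))
            show "\<forall>m\<in>T. \<forall>y. D4 (p a) (p b) (p m) y = 0" using B a bb(1) by blast
          qed
        next
          case False
          then have "T = {a}" using a by blast
          moreover have "i \<noteq> a" using iT a by auto
          ultimately show ?thesis
          proof (intro that[of i])
            show "i < 10" by (rule ijk(1))
            show "\<forall>m\<in>T. \<forall>y. D4 (p a) (p i) (p m) y = 0" using \<open>T = {a}\<close> by (simp add: D4_eq0)
          qed
        qed
        obtain l where l: "l \<noteq> 0" "\<forall>m<10. (\<forall>y. D4 (p a) (p b) (p m) y = 0) \<longrightarrow> dotc l (p m) = 0"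
          using line[OF aT b(1) b(2)[symmetric]] by blast
        show False
        proof (rule forms[OF Lnz l(1)])
          fix m :: nat assume m: "m < 10"
          show "dotc L (p m) = 0 \<or> dotc l (p m) = 0"
          proof (cases "m \<in> T")
            case True then show ?thesis using b(3) l(2) m by blast
          next
            case False then show ?thesis using offT m by blast
          qed
        qed
      qed
    qed
  qed
qed


end
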